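(* Let $\mathcal{D}$ denote either the unit circle $S^1$ or the unit interval $[0,1]$, and let $c:\mathcal{D}\to\mathbb{R}^2$ be a smooth immersed plane curve with speed $\omega=|\dot c|>0$ and signed curvature $\kappa$. Let $\tilde c:=q(c)=\dot c/\sqrt{|\dot c|}$ be its square root velocity transform, and denote the speed of $\tilde c$ by $\tilde\omega=|\dot{\tilde c}|$. Then \[ \tilde{\omega}=\sqrt{\frac{\dot{\omega}^2}{4\omega}+\omega^3\kappa^2}. \] Moreover, $\tilde c$ is an immersion if and only if $\kappa$ and $\dot\omega$ have no common zeros. In this case, \[ \tilde{\kappa}\,\tilde{\omega}=\kappa\,\omega+\dot{\varphi}, \] where $\tilde\kappa$ denotes the signed curvature of $\tilde c$ and \[ \varphi:=\arctan\!\left(\frac{2\omega^2\kappa}{\dot{\omega}}\right). \]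
   Context: Dots denote derivatives with respect to the curve parameter $t\in\mathcal{D}$. For the plane curve $c$, $T=\dot c/\omega$ is the unit tangent, $N$ is the unit normal (obtained by rotating $T$ by $+\pi/2$), and the signed curvature $\kappa$ is defined by the Frenet equations $\dot T=\omega\kappa N$, $\dot N=-\omega\kappa T$; the signed curvature of $\tilde c$ is defined analogously. The square root velocity transform $\tilde c=\dot c/\sqrt{|\dot c|}$ is again a smooth curve in $\mathbb{R}^2$, but need not be an immersion. *)

theory Defs
  imports "HOL-Analysis.Analysis"
begin

text \<open>Plane curves are modelled as maps into the complex plane (identified with R^2).
  Rotation by +pi/2 is multiplication by the imaginary unit.\<close>

definition dot :: "(real \<Rightarrow> complex) \<Rightarrow> real \<Rightarrow> complex" where
  "dot f t = vector_derivative f (at t)"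

definition smooth_on :: "real set \<Rightarrow> (real \<Rightarrow> complex) \<Rightarrow> bool" where
  "smooth_on U f \<longleftrightarrow> (\<forall>n. \<forall>t\<in>U. ((dot ^^ n) f) differentiable (at t))"

definition speed :: "(real \<Rightarrow> complex) \<Rightarrow> real \<Rightarrow> real" where
  "speed f t = norm (dot f t)"

definition unit_tangent :: "(real \<Rightarrow> complex) \<Rightarrow> real \<Rightarrow> complex" where
  "unit_tangent f t = dot f t / complex_of_real (speed f t)"

definition unit_normal :: "(real \<Rightarrow> complex) \<Rightarrow> real \<Rightarrow> complex" where
  "unit_normal f t = \<i> * unit_tangent f t"

definition signed_curvature :: "(real \<Rightarrow> complex) \<Rightarrow> real \<Rightarrow> real" where
  "signed_curvature f t =
     (THE k::real. dot (unit_tangent f) t = complex_of_real (speed f t * k) * unit_normal f t)"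

definition srv :: "(real \<Rightarrow> complex) \<Rightarrow> real \<Rightarrow> complex" where
  "srv f t = dot f t / complex_of_real (sqrt (speed f t))"

definition immersion_on :: "real set \<Rightarrow> (real \<Rightarrow> complex) \<Rightarrow> bool" where
  "immersion_on D f \<longleftrightarrow> (\<forall>t\<in>D. dot f t \<noteq> 0)"

end

theory Submission
  imports Defs
begin

lemma dot_eq: "(f has_vector_derivative a) (at t) \<Longrightarrow> dot f t = a"
  by (simp add: dot_def vector_derivative_at)

lemma vd_norm:
  assumes f: "(f has_vector_derivative a) (at x)" and nz: "f x \<noteq> 0"
  shows "((\<lambda>s. cmod (f s)) has_real_derivative (cmod (f x) * Re (a / f x))) (at x)"
proof -
  have r: "((\<lambda>s. Re (f s)) has_real_derivative Re a) (at x)" and i: "((\<lambda>s. Im (f s)) has_real_derivative Im a) (at x)"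
    using f by (auto simp: has_vector_derivative_complex_iff)
  have pos: "0 < (Re (f x))\<^sup>2 + (Im (f x))\<^sup>2" using nz
    by (simp add: cmod_power2[symmetric])
  have "((\<lambda>s. sqrt ((Re (f s))\<^sup>2 + (Im (f s))\<^sup>2)) has_real_derivative
     (inverse (sqrt ((Re (f x))\<^sup>2 + (Im (f x))\<^sup>2)) / 2) * (2 * Re (f x) * Re a + 2 * Im (f x) * Im a)) (at x)"
    by (rule DERIV_chain2[where g="\<lambda>s. (Re (f s))\<^sup>2 + (Im (f s))\<^sup>2" and x=x, OF DERIV_real_sqrt[OF pos]]) (auto intro!: derivative_eq_intros f)
  moreover have "(inverse (sqrt ((Re (f x))\<^sup>2 + (Im (f x))\<^sup>2)) / 2) * (2 * Re (f x) * Re a + 2 * Im (f x) * Im a)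
     = cmod (f x) * Re (a / f x)"
  proof -
    define S where "S = (Re (f x))\<^sup>2 + (Im (f x))\<^sup>2"
    have rp: "sqrt S > 0" using pos S_def by simp
    have SS: "S = sqrt S * sqrt S" using pos S_def by simp
    have "cmod (f x) * Re (a / f x) = sqrt S * ((Re a * Re (f x) + Im a * Im (f x)) / S)"
      by (simp add: cmod_def Re_divide S_def)
    also have "\<dots> = (Re a * Re (f x) + Im a * Im (f x)) / sqrt S"
    proof -
      have aux: "\<And>r X. (r::real) > 0 \<Longrightarrow> r * (X/(r*r)) = X/r" by (simp add: field_simps)
      show ?thesis by (metis aux[OF rp] SS)
    qed
    finally have eq: "cmod (f x) * Re (a / f x) = (Re a * Re (f x) + Im a * Im (f x)) / sqrt S" .
    show ?thesis unfolding eq S_def[symmetric] using rp by (simp add: field_simps)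
  qed
  ultimately show ?thesis by (simp add: cmod_def)
qed

lemma vd_inverse:
  fixes f :: "real \<Rightarrow> complex"
  assumes f: "(f has_vector_derivative a) (at x)" and nz: "f x \<noteq> 0"
  shows "((\<lambda>s. inverse (f s)) has_vector_derivative (- (a / (f x)^2))) (at x)"
proof -
  have "((\<lambda>s. inverse (f s)) has_derivative (\<lambda>h. - (inverse (f x) * (h *\<^sub>R a) * inverse (f x)))) (at x)"
    using f nz by (auto intro!: derivative_eq_intros simp: has_vector_derivative_def)
  moreover have "(\<lambda>h. - (inverse (f x) * (h *\<^sub>R a) * inverse (f x))) = (\<lambda>h. h *\<^sub>R (- (a / (f x)^2)))"
    using nz by (auto simp: fun_eq_iff scaleR_conv_of_real field_simps power2_eq_square)
  ultimately show ?thesis by (simp add: has_vector_derivative_def)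
qed

lemma curv:
  assumes f: "(dot f has_vector_derivative a) (at t)" and nz: "dot f t \<noteq> 0"
  shows "signed_curvature f t = Im (a / dot f t) / cmod (dot f t)"
proof -
  let ?v = "dot f t"
  let ?n = "cmod ?v"
  have n0: "?n \<noteq> 0" using nz by simp
  have d1: "((\<lambda>s. inverse (speed f s)) has_real_derivative (- (?n * Re (a / ?v)) / ?n^2)) (at t)"
    unfolding speed_def
    by (rule DERIV_cong[OF DERIV_inverse_fun[OF vd_norm[OF f nz] n0]]) (use nz in \<open>simp add: field_simps power2_eq_square\<close>)
  have "((\<lambda>s. dot f s * of_real (inverse (speed f s))) has_vector_derivative
     (?v * of_real (- (?n * Re (a / ?v)) / ?n^2) + a * of_real (inverse (speed f t)))) (at t)"
    by (rule has_vector_derivative_mult[OF f has_vector_derivative_of_real[OF d1]])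
  moreover have "unit_tangent f = (\<lambda>s. dot f s * of_real (inverse (speed f s)))"
    by (auto simp: fun_eq_iff unit_tangent_def divide_inverse)
  ultimately have T: "dot (unit_tangent f) t = ?v * of_real (- (?n * Re (a / ?v)) / ?n^2) + a * of_real (inverse ?n)"
    by (simp add: dot_eq speed_def)
  let ?k = "Im (a / ?v) / ?n"
  have a: "a = ?v * (a / ?v)" using nz by simp
  have key: "dot (unit_tangent f) t = complex_of_real (speed f t * K) * unit_normal f t \<longleftrightarrow> K = ?k" for K
  proof -
    have "dot (unit_tangent f) t = ?v * of_real (inverse ?n) * (a / ?v - of_real (Re (a / ?v)))"
      unfolding T using nz n0 by (simp add: field_simps power2_eq_square)
    also have "a / ?v - of_real (Re (a / ?v)) = \<i> * of_real (Im (a / ?v))"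
      by (simp add: complex_eq_iff)
    finally have "dot (unit_tangent f) t = complex_of_real (?n * ?k) * (\<i> * (?v / of_real ?n))"
      using n0 by (simp add: field_simps)
    then have "dot (unit_tangent f) t = complex_of_real ?k * (\<i> * ?v)"
      using n0 by (simp add: field_simps)
    moreover have "complex_of_real (speed f t * K) * unit_normal f t = complex_of_real K * (\<i> * ?v)"
      using n0 by (simp add: speed_def unit_normal_def unit_tangent_def field_simps)
    moreover have "\<i> * ?v \<noteq> 0" using nz by simp
    ultimately show ?thesis by (metis mult_cancel_right of_real_eq_iff)
  qed
  show ?thesis unfolding signed_curvature_def
    by (rule the_equality) (simp_all only: key)
qed

lemma inv_sqrt_norm_deriv:
  assumes f: "(f has_vector_derivative a) (at x)" and nz: "f x \<noteq> 0"
  shows "((\<lambda>s. inverse (sqrt (cmod (f s)))) has_real_derivative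
           - (Re (a / f x) * inverse (sqrt (cmod (f x)))) / 2) (at x)"
proof -
  let ?n = "cmod (f x)"
  have npos: "0 < ?n" using nz by simp
  have d1: "((\<lambda>s. sqrt (cmod (f s))) has_real_derivative (inverse (sqrt ?n) / 2 * (?n * Re (a / f x)))) (at x)"
    by (rule DERIV_chain2[where g="\<lambda>s. cmod (f s)" and x=x, OF DERIV_real_sqrt[OF npos] vd_norm[OF f nz]])
  have s0: "sqrt ?n \<noteq> 0" using npos by simp
  show ?thesis
    by (rule DERIV_cong[OF DERIV_inverse_fun[OF d1 s0]])
       (use npos in \<open>simp add: field_simps power2_eq_square\<close>)
qed

lemma srv_deriv:
  assumes f: "(dot f has_vector_derivative a) (at t)" and nz: "dot f t \<noteq> 0"
  shows "(srv f has_vector_derivative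
     dot f t * of_real (inverse (sqrt (cmod (dot f t)))) * (a / dot f t - of_real (Re (a / dot f t)) / 2)) (at t)"
proof -
  have e: "srv f = (\<lambda>s. dot f s * of_real (inverse (sqrt (cmod (dot f s)))))"
    by (auto simp: fun_eq_iff srv_def speed_def divide_inverse)
  have "((\<lambda>s. dot f s * of_real (inverse (sqrt (cmod (dot f s))))) has_vector_derivative
     (dot f t * of_real (- (Re (a / dot f t) * inverse (sqrt (cmod (dot f t)))) / 2) +
      a * of_real (inverse (sqrt (cmod (dot f t)))))) (at t)"
    by (rule has_vector_derivative_mult[OF f has_vector_derivative_of_real[OF inv_sqrt_norm_deriv[OF f nz]]])
  moreover have "dot f t * of_real (- (Re (a / dot f t) * inverse (sqrt (cmod (dot f t)))) / 2) +
      a * of_real (inverse (sqrt (cmod (dot f t)))) =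
     dot f t * of_real (inverse (sqrt (cmod (dot f t)))) * (a / dot f t - of_real (Re (a / dot f t)) / 2)"
    using nz by (simp add: field_simps)
  ultimately show ?thesis unfolding e by simp
qed

lemma arc_aux:
  fixes R I a b :: real
  assumes "R \<noteq> 0"
  shows "inverse (1 + (I / R)\<^sup>2) * ((b * R - I * a) / (R * R)) = (b * R - a * I) / (R\<^sup>2 + I\<^sup>2)"
proof -
  define S where "S = R\<^sup>2 + I\<^sup>2"
  have p: "S > 0" using assms by (simp add: add_pos_nonneg S_def)
  have "1 + (I / R)\<^sup>2 = S / R\<^sup>2" using assms by (simp add: field_simps S_def)
  then have "inverse (1 + (I / R)\<^sup>2) = R\<^sup>2 / S" by simp
  moreover have "R\<^sup>2 / S * ((b * R - I * a) / (R * R)) = (b * R - a * I) / S"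
    using assms p by (simp add: power2_eq_square)
  ultimately show ?thesis by (simp add: S_def)
qed

lemma main_pt:
  fixes c :: "real \<Rightarrow> complex"
  assumes V: "open V" "t \<in> V"
    and d1: "\<And>s. s \<in> V \<Longrightarrow> (dot c has_vector_derivative dot (dot c) s) (at s)"
    and nz: "\<And>s. s \<in> V \<Longrightarrow> dot c s \<noteq> 0"
    and d2: "(dot (dot c) has_vector_derivative dot (dot (dot c)) t) (at t)"
  shows "speed (srv c) t = sqrt ((deriv (speed c) t)\<^sup>2 / (4 * speed c t) + (speed c t)^3 * (signed_curvature c t)\<^sup>2)"
    and "dot (srv c) t \<noteq> 0 \<longleftrightarrow> \<not> (signed_curvature c t = 0 \<and> deriv (speed c) t = 0)"
    and "dot (srv c) t \<noteq> 0 \<Longrightarrow> signed_curvature (srv c) t * speed (srv c) t = signed_curvature c t * speed c t +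
              (if deriv (speed c) t \<noteq> 0
               then deriv (\<lambda>s. arctan (2 * (speed c s)\<^sup>2 * signed_curvature c s / deriv (speed c) s)) t
               else - deriv (\<lambda>s. arctan (deriv (speed c) s / (2 * (speed c s)\<^sup>2 * signed_curvature c s))) t)"
proof -
  define p where "p = dot c"
  define p1 where "p1 = dot p"
  define z where "z s = p1 s / p s" for s
  define h where "h s = z s - of_real (Re (z s)) / 2" for s
  define r where "r s = inverse (sqrt (cmod (p s)))" for s
  have sp: "speed c = (\<lambda>s. cmod (p s))" by (auto simp: fun_eq_iff speed_def p_def)
  have F1: "deriv (speed c) s = cmod (p s) * Re (z s)" if "s \<in> V" for s
    unfolding sp z_def p1_def p_def
    by (rule DERIV_imp_deriv, rule vd_norm[OF d1[OF that] nz[OF that]])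
  have F2: "signed_curvature c s = Im (z s) / cmod (p s)" if "s \<in> V" for s
    unfolding z_def p1_def p_def by (rule curv[OF d1[OF that] nz[OF that]])
  have F3: "dot (srv c) s = p s * of_real (r s) * h s" if "s \<in> V" for s
    unfolding h_def z_def p1_def p_def r_def
    by (rule dot_eq, rule srv_deriv[OF d1[OF that] nz[OF that]])
  have pt: "p t \<noteq> 0" using nz V p_def by simp
  have nt: "cmod (p t) > 0" using pt by simp
  have rt: "r t \<noteq> 0" using nt by (simp add: r_def)
  show 1: "speed (srv c) t = sqrt ((deriv (speed c) t)\<^sup>2 / (4 * speed c t) + (speed c t)^3 * (signed_curvature c t)\<^sup>2)"
  proof -
    have "speed (srv c) t = sqrt (cmod (p t)) * cmod (h t)"
    proof -
      have "speed (srv c) t = cmod (p t) * \<bar>r t\<bar> * cmod (h t)"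
        unfolding speed_def F3[OF V(2)] norm_mult norm_of_real ..
      moreover have "cmod (p t) * \<bar>r t\<bar> = sqrt (cmod (p t))"
        using nt unfolding r_def by (simp add: real_div_sqrt divide_inverse[symmetric])
      ultimately show ?thesis by simp
    qed
    also have "cmod (h t) = sqrt ((Re (z t) / 2)\<^sup>2 + (Im (z t))\<^sup>2)"
      by (simp add: h_def cmod_def)
    also have "sqrt (cmod (p t)) * sqrt ((Re (z t) / 2)\<^sup>2 + (Im (z t))\<^sup>2)
        = sqrt (cmod (p t) * ((Re (z t) / 2)\<^sup>2 + (Im (z t))\<^sup>2))"
      by (simp add: real_sqrt_mult)
    also have "cmod (p t) * ((Re (z t) / 2)\<^sup>2 + (Im (z t))\<^sup>2) =
        (deriv (speed c) t)\<^sup>2 / (4 * speed c t) + (speed c t)^3 * (signed_curvature c t)\<^sup>2"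
      unfolding F1[OF V(2)] F2[OF V(2)] using nt by (simp add: sp field_simps power2_eq_square power3_eq_cube)
    finally show ?thesis .
  qed
  have hz: "h t \<noteq> 0 \<longleftrightarrow> \<not> (Re (z t) = 0 \<and> Im (z t) = 0)"
    by (simp add: h_def complex_eq_iff)
  show 2: "dot (srv c) t \<noteq> 0 \<longleftrightarrow> \<not> (signed_curvature c t = 0 \<and> deriv (speed c) t = 0)"
    using nt pt rt hz by (auto simp: F1[OF V(2)] F2[OF V(2)] F3[OF V(2)])
  assume imm: "dot (srv c) t \<noteq> 0"
  then have ht: "h t \<noteq> 0" by (simp add: F3[OF V(2)])
  have dp: "(p has_vector_derivative p1 t) (at t)" using d1[OF V(2)] by (simp add: p_def p1_def)
  have dp1: "(p1 has_vector_derivative dot p1 t) (at t)" using d2 by (simp add: p_def p1_def)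
  have zeq: "z = (\<lambda>s. p1 s * inverse (p s))" by (simp add: fun_eq_iff z_def divide_inverse)
  have dz: "(z has_vector_derivative (p1 t * (- (p1 t / (p t)^2)) + dot p1 t * inverse (p t))) (at t)"
    unfolding zeq by (rule has_vector_derivative_mult[OF dp1 vd_inverse[OF dp pt]])
  define z' where "z' = p1 t * (- (p1 t / (p t)^2)) + dot p1 t * inverse (p t)"
  define h' where "h' = z' - of_real (Re z') / 2"
  have dh: "(h has_vector_derivative h') (at t)"
    unfolding h_def[abs_def] h'_def
    by (intro derivative_intros has_vector_derivative_of_real has_field_derivative_Re dz[folded z'_def])
  have dr: "(r has_real_derivative - (Re (p1 t / p t) * r t) / 2) (at t)"
    unfolding r_def[abs_def] by (rule inv_sqrt_norm_deriv[OF dp pt])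
  define r' where "r' = - (Re (p1 t / p t) * r t) / 2"
  define A where "A = p t * of_real (r t) * h' + (p t * of_real r' + p1 t * of_real (r t)) * h t"
  have dA0: "((\<lambda>s. p s * of_real (r s) * h s) has_vector_derivative A) (at t)"
    unfolding A_def
    by (rule has_vector_derivative_mult[OF has_vector_derivative_mult[OF dp has_vector_derivative_of_real[OF dr[folded r'_def]]] dh])
  have dA: "(dot (srv c) has_vector_derivative A) (at t)"
    by (rule has_vector_derivative_transform_within_open[OF dA0 V]) (simp add: F3)
  have kt: "signed_curvature (srv c) t = Im (A / dot (srv c) t) / cmod (dot (srv c) t)"
    by (rule curv[OF dA imm])
  have L: "signed_curvature (srv c) t * speed (srv c) t = Im (A / dot (srv c) t)"
    using imm by (simp add: kt speed_def)
  have "A / dot (srv c) t = p1 t / p t + of_real (r' / r t) + h' / h t"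
    unfolding F3[OF V(2)] A_def using pt rt ht by (simp add: field_simps)
  then have L2: "Im (A / dot (srv c) t) = Im (z t) + Im (h' / h t)"
    by (simp add: z_def)
  have R1: "signed_curvature c t * speed c t = Im (z t)"
    using nt by (simp add: F2[OF V(2)] sp)
  have hRe: "Re (h s) = Re (z s) / 2" and hIm: "Im (h s) = Im (z s)" for s
    by (simp_all add: h_def)
  have dRe: "((\<lambda>s. Re (h s)) has_real_derivative Re h') (at t)"
    and dIm: "((\<lambda>s. Im (h s)) has_real_derivative Im h') (at t)"
    using dh by (simp_all add: has_field_derivative_Re has_vector_derivative_complex_iff)
  have Imq: "Im (h' / h t) = (Im h' * Re (h t) - Re h' * Im (h t)) / ((Re (h t))\<^sup>2 + (Im (h t))\<^sup>2)"
    by (simp add: Im_divide)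
  have hsq: "(Re (h t))\<^sup>2 + (Im (h t))\<^sup>2 \<noteq> 0" using ht
    by (simp add: complex_eq_iff)
  show "signed_curvature (srv c) t * speed (srv c) t = signed_curvature c t * speed c t +
              (if deriv (speed c) t \<noteq> 0
               then deriv (\<lambda>s. arctan (2 * (speed c s)\<^sup>2 * signed_curvature c s / deriv (speed c) s)) t
               else - deriv (\<lambda>s. arctan (deriv (speed c) s / (2 * (speed c s)\<^sup>2 * signed_curvature c s))) t)"
  proof (cases "Re (z t) = 0")
    case False
    then have dw: "deriv (speed c) t \<noteq> 0" using nt by (simp add: F1[OF V(2)])
    have R0: "Re (h t) \<noteq> 0" using False by (simp add: hRe)
    have D: "((\<lambda>s. arctan (Im (h s) / Re (h s))) has_real_derivative
        inverse (1 + (Im (h t) / Re (h t))\<^sup>2) * ((Im h' * Re (h t) - Im (h t) * Re h') / (Re (h t) * Re (h t)))) (at t)"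
      by (rule DERIV_chain2[where g="\<lambda>s. Im (h s) / Re (h s)", OF DERIV_arctan DERIV_divide[OF dIm dRe R0]])
    have eqf: "arctan (Im (h s) / Re (h s)) = arctan (2 * (speed c s)\<^sup>2 * signed_curvature c s / deriv (speed c) s)"
      if "s \<in> V" for s
    proof -
      have ns: "cmod (p s) \<noteq> 0" using nz[OF that] by (simp add: p_def)
      show ?thesis
        unfolding F1[OF that] F2[OF that] hRe hIm
        using ns by (cases "Re (z s) = 0") (simp_all add: sp field_simps power2_eq_square)
    qed
    have "deriv (\<lambda>s. arctan (2 * (speed c s)\<^sup>2 * signed_curvature c s / deriv (speed c) s)) t = 
        inverse (1 + (Im (h t) / Re (h t))\<^sup>2) * ((Im h' * Re (h t) - Im (h t) * Re h') / (Re (h t) * Re (h t)))"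
      by (rule DERIV_imp_deriv, rule has_field_derivative_transform_within_open[OF D V eqf])
    also have "\<dots> = Im (h' / h t)"
      unfolding Imq by (rule arc_aux[OF R0])
    finally show ?thesis using dw L L2 R1 by simp
  next
    case True
    then have dw: "deriv (speed c) t = 0" using nt by (simp add: F1[OF V(2)])
    have I0: "Im (h t) \<noteq> 0" using True hz ht hIm by simp
    have D: "((\<lambda>s. arctan (Re (h s) / Im (h s))) has_real_derivative
        inverse (1 + (Re (h t) / Im (h t))\<^sup>2) * ((Re h' * Im (h t) - Re (h t) * Im h') / (Im (h t) * Im (h t)))) (at t)"
      by (rule DERIV_chain2[where g="\<lambda>s. Re (h s) / Im (h s)", OF DERIV_arctan DERIV_divide[OF dRe dIm I0]])
    have eqf: "arctan (Re (h s) / Im (h s)) = arctan (deriv (speed c) s / (2 * (speed c s)\<^sup>2 * signed_curvature c s))"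
      if "s \<in> V" for s
    proof -
      have ns: "cmod (p s) \<noteq> 0" using nz[OF that] by (simp add: p_def)
      show ?thesis
        unfolding F1[OF that] F2[OF that] hRe hIm
        using ns by (cases "Im (z s) = 0") (simp_all add: sp field_simps power2_eq_square)
    qed
    have "deriv (\<lambda>s. arctan (deriv (speed c) s / (2 * (speed c s)\<^sup>2 * signed_curvature c s))) t = 
        inverse (1 + (Re (h t) / Im (h t))\<^sup>2) * ((Re h' * Im (h t) - Re (h t) * Im h') / (Im (h t) * Im (h t)))"
      by (rule DERIV_imp_deriv, rule has_field_derivative_transform_within_open[OF D V eqf])
    also have "\<dots> = (Re h' * Im (h t) - Im h' * Re (h t)) / ((Im (h t))\<^sup>2 + (Re (h t))\<^sup>2)"
      by (rule arc_aux[OF I0])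
    also have "\<dots> = - Im (h' / h t)"
      unfolding Imq by (simp add: add.commute diff_divide_distrib)
    finally show ?thesis using dw L L2 R1 by simp
  qed
qed

theorem proposition1:
  fixes c :: "real \<Rightarrow> complex" and D U :: "real set"
  assumes dom: "D = {0..1} \<or> (D = UNIV \<and> (\<forall>t. c (t + 1) = c t))"
    and "open U" and "D \<subseteq> U" and "smooth_on U c"
    and "\<forall>t\<in>D. speed c t > 0"
  defines "w \<equiv> speed c" and "k \<equiv> signed_curvature c"
    and "ct \<equiv> srv c" and "wt \<equiv> speed (srv c)" and "kt \<equiv> signed_curvature (srv c)"
  shows "(\<forall>t\<in>D. wt t = sqrt ((deriv w t)\<^sup>2 / (4 * w t) + (w t)^3 * (k t)\<^sup>2))
       \<and> (immersion_on D ct \<longleftrightarrow> (\<forall>t\<in>D. \<not> (k t = 0 \<and> deriv w t = 0)))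
       \<and> (immersion_on D ct \<longrightarrow>
           (\<forall>t\<in>D. kt t * wt t = k t * w t +
              (if deriv w t \<noteq> 0
               then deriv (\<lambda>s. arctan (2 * (w s)\<^sup>2 * k s / deriv w s)) t
               else - deriv (\<lambda>s. arctan (deriv w s / (2 * (w s)\<^sup>2 * k s))) t)))"
proof -
  have sm: "\<And>n t. t \<in> U \<Longrightarrow> ((dot ^^ n) c) differentiable (at t)"
    using assms(4) by (auto simp: smooth_on_def)
  have dc: "dot c differentiable (at s)" if "s \<in> U" for s using sm[OF that, of 1] by simp
  have ddc: "dot (dot c) differentiable (at s)" if "s \<in> U" for s using sm[OF that, of 2] by (simp add: numeral_2_eq_2)
  have hv1: "(dot c has_vector_derivative dot (dot c) s) (at s)" if "s \<in> U" for s
    using vector_derivative_works[THEN iffD1, OF dc[OF that]] by (simp add: dot_def[of "dot c"])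
  have hv2: "(dot (dot c) has_vector_derivative dot (dot (dot c)) s) (at s)" if "s \<in> U" for s
    using vector_derivative_works[THEN iffD1, OF ddc[OF that]] by (simp add: dot_def[of "dot (dot c)"])
  have cont: "continuous_on U (dot c)"
    by (intro continuous_at_imp_continuous_on ballI differentiable_imp_continuous_within dc)
  define V where "V = U \<inter> dot c -` (-{0})"
  have oV: "open V" unfolding V_def by (rule continuous_open_preimage[OF cont assms(2)]) auto
  have P: "speed (srv c) t = sqrt ((deriv (speed c) t)\<^sup>2 / (4 * speed c t) + (speed c t)^3 * (signed_curvature c t)\<^sup>2)
    \<and> (dot (srv c) t \<noteq> 0 \<longleftrightarrow> \<not> (signed_curvature c t = 0 \<and> deriv (speed c) t = 0))
    \<and> (dot (srv c) t \<noteq> 0 \<longrightarrow> signed_curvature (srv c) t * speed (srv c) t = signed_curvature c t * speed c t +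
              (if deriv (speed c) t \<noteq> 0
               then deriv (\<lambda>s. arctan (2 * (speed c s)\<^sup>2 * signed_curvature c s / deriv (speed c) s)) t
               else - deriv (\<lambda>s. arctan (deriv (speed c) s / (2 * (speed c s)\<^sup>2 * signed_curvature c s))) t))"
    if "t \<in> D" for t
  proof -
    have tV: "t \<in> V" using that assms(3,5) by (auto simp: V_def speed_def)
    have tU: "t \<in> U" using that assms(3) by auto
    have a1: "\<And>s. s \<in> V \<Longrightarrow> (dot c has_vector_derivative dot (dot c) s) (at s)"
      using hv1 by (auto simp: V_def)
    have a2: "\<And>s. s \<in> V \<Longrightarrow> dot c s \<noteq> 0" by (auto simp: V_def)
    show ?thesis using main_pt[OF oV tV a1 a2 hv2[OF tU]] by blast
  qed
  show ?thesis
    unfolding w_def k_def ct_def wt_def kt_def immersion_on_def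
    using P by blast
qed

end
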